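(* The semantics $\mathit{cf2}$ and $\mathit{stg2}$ satisfy the weak reinstatement criterion: for every argumentation framework $\mathcal{F}$ and every $S\in\mathit{cf2}(\mathcal{F})$ or $S\in\mathit{stg2}(\mathcal{F})$, $S$ contains the grounded extension of $\mathcal{F}$.
   Context: An argumentation framework (AF) is $\mathcal{F}=(A_{\mathcal{F}},R_{\mathcal{F}})$ with $R_{\mathcal{F}}\subseteq A_{\mathcal{F}}\times A_{\mathcal{F}}$ (possibly infinite); $a\rightarrow b$ means $(a,b)\in R_{\mathcal{F}}$. $S$ defends $a$ if every attacker of $a$ is attacked by some element of $S$; the grounded extension is the least fixed point of $S\mapsto\{x:S\text{ defends }x\}$. $\mathcal{F}|_B=(A_{\mathcal{F}}\cap B,R_{\mathcal{F}}\cap(B\times B))$. Conflict-free: no $a,b\in S$ with $a\rightarrow b$; naive: $\subseteq$-maximal conflict-free; $S^\oplus=S\cup\{x:\exists y\in S,\ y\rightarrow x\}$; stage: conflict-free $S$ with no conflict-free $T$ having $S^\oplus\subsetneq T^\oplus$. $\mathrm{SCC}(\mathcal{F})$: strongly connected components of the attack graph. $D_S(X)=\{b\in X:\exists a\in S\setminus X,\ a\rightarrow b\}$. $S\in\mathit{cf2}(\mathcal{F})$ iff either $|\mathrm{SCC}(\mathcal{F})|=1$ and $S$ is naive in $\mathcal{F}$, or $|\mathrm{SCC}(\mathcal{F})|\ne 1$ and for each $X\in\mathrm{SCC}(\mathcal{F})$, $S\cap X\in\mathit{cf2}(\mathcal{F}|_{X\setminus D_S(X)})$ (recursively). For infinite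 AFs the recursion may be ill-founded; $S$ is counted as a member of $\mathit{cf2}(\mathcal{F})$ only when the tree of recursive calls has no infinite branch and the condition holds at every leaf. $\mathit{stg2}$ is the same with stage in place of naive. *)

theory Defs
  imports Main
begin

type_synonym 'a af = "'a set \<times> ('a \<times> 'a) set"

definition args :: "'a af \<Rightarrow> 'a set" where "args F = fst F"
definition atts :: "'a af \<Rightarrow> ('a \<times> 'a) set" where "atts F = snd F"

definition wf_af :: "'a af \<Rightarrow> bool" where
  "wf_af F \<longleftrightarrow> atts F \<subseteq> args F \<times> args F"

definition defends :: "'a af \<Rightarrow> 'a set \<Rightarrow> 'a \<Rightarrow> bool" where
  "defends F S a \<longleftrightarrow> (\<forall>b. (b, a) \<in> atts F \<longrightarrow> (\<exists>c\<in>S. (c, b) \<in> atts F))"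

definition char_fun :: "'a af \<Rightarrow> 'a set \<Rightarrow> 'a set" where
  "char_fun F S = {x \<in> args F. defends F S x}"

definition grounded :: "'a af \<Rightarrow> 'a set" where
  "grounded F = lfp (char_fun F)"

definition restrict_af :: "'a af \<Rightarrow> 'a set \<Rightarrow> 'a af" where
  "restrict_af F B = (args F \<inter> B, atts F \<inter> (B \<times> B))"

definition conflict_free :: "'a af \<Rightarrow> 'a set \<Rightarrow> bool" where
  "conflict_free F S \<longleftrightarrow> S \<subseteq> args F \<and> (\<forall>a\<in>S. \<forall>b\<in>S. (a, b) \<notin> atts F)"

definition naive :: "'a af \<Rightarrow> 'a set \<Rightarrow> bool" where
  "naive F S \<longleftrightarrow> conflict_free F S \<and> (\<forall>T. conflict_free F T \<and> S \<subseteq> T \<longrightarrow> T = S)"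

definition range_plus :: "'a af \<Rightarrow> 'a set \<Rightarrow> 'a set" where
  "range_plus F S = S \<union> {x. \<exists>y\<in>S. (y, x) \<in> atts F}"

definition stage :: "'a af \<Rightarrow> 'a set \<Rightarrow> bool" where
  "stage F S \<longleftrightarrow> conflict_free F S \<and>
     \<not> (\<exists>T. conflict_free F T \<and> range_plus F S \<subset> range_plus F T)"

definition SCCs :: "'a af \<Rightarrow> 'a set set" where
  "SCCs F = (\<lambda>x. {y \<in> args F. (x, y) \<in> (atts F)\<^sup>* \<and> (y, x) \<in> (atts F)\<^sup>*}) ` args F"

definition D_set :: "'a af \<Rightarrow> 'a set \<Rightarrow> 'a set \<Rightarrow> 'a set" where
  "D_set F S X = {b \<in> X. \<exists>a \<in> S - X. (a, b) \<in> atts F}"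

text \<open>SCC-recursive scheme over a base semantics. Being inductive (least fixed point),
  membership requires a well-founded tree of recursive calls.\<close>
inductive scc_rec :: "('a af \<Rightarrow> 'a set \<Rightarrow> bool) \<Rightarrow> 'a af \<Rightarrow> 'a set \<Rightarrow> bool"
  for base where
  single: "(\<exists>X. SCCs F = {X}) \<Longrightarrow> base F S \<Longrightarrow> scc_rec base F S"
| multi: "\<not> (\<exists>X. SCCs F = {X}) \<Longrightarrow> S \<subseteq> args F \<Longrightarrow>
     (\<forall>X \<in> SCCs F. scc_rec base (restrict_af F (X - D_set F S X)) (S \<inter> X)) \<Longrightarrow>
     scc_rec base F S"

definition cf2 :: "'a af \<Rightarrow> 'a set \<Rightarrow> bool" where "cf2 = scc_rec naive"
definition stg2 :: "'a af \<Rightarrow> 'a set \<Rightarrow> bool" where "stg2 = scc_rec stage"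

end

theory Submission
  imports Defs
begin

definition scc_of :: "'a af \<Rightarrow> 'a \<Rightarrow> 'a set" where
  "scc_of F x = {y \<in> args F. (x, y) \<in> (atts F)\<^sup>* \<and> (y, x) \<in> (atts F)\<^sup>*}"

lemma scc_of_in: "x \<in> args F \<Longrightarrow> scc_of F x \<in> SCCs F"
  unfolding SCCs_def scc_of_def by blast

lemma scc_of_self: "x \<in> args F \<Longrightarrow> x \<in> scc_of F x"
  unfolding scc_of_def by auto

lemma scc_of_eq: "c \<in> scc_of F x \<Longrightarrow> scc_of F c = scc_of F x"
  unfolding scc_of_def by (auto intro: rtrancl_trans)

lemma SCCs_scc: "X \<in> SCCs F \<Longrightarrow> \<exists>x\<in>args F. X = scc_of F x"
  unfolding SCCs_def scc_of_def by blast

lemma mono_char: "mono (char_fun F)"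
  unfolding mono_def char_fun_def defends_def by blast

lemma grounded_fix: "grounded F = char_fun F (grounded F)"
  unfolding grounded_def using lfp_unfold[OF mono_char] .

lemma grounded_args: "grounded F \<subseteq> args F"
  using grounded_fix[of F] unfolding char_fun_def by blast

lemma grounded_induct:
  assumes "\<And>x T. x \<in> args F \<Longrightarrow> T \<subseteq> grounded F \<Longrightarrow> T \<subseteq> P \<Longrightarrow> defends F T x \<Longrightarrow> x \<in> P"
  shows "grounded F \<subseteq> P"
  unfolding grounded_def
proof (rule lfp_induct[OF mono_char])
  show "char_fun F (inf (lfp (char_fun F)) P) \<le> P"
  proof
    fix x assume "x \<in> char_fun F (inf (lfp (char_fun F)) P)"
    hence "x \<in> args F" "defends F (lfp (char_fun F) \<inter> P) x" unfolding char_fun_def by auto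
    then show "x \<in> P" using assms[of x "lfp (char_fun F) \<inter> P"] unfolding grounded_def by blast
  qed
qed

lemma wf_restrict: "wf_af F \<Longrightarrow> wf_af (restrict_af F B)"
  unfolding wf_af_def restrict_af_def args_def atts_def by auto

lemma args_restrict: "args (restrict_af F B) = args F \<inter> B"
  unfolding restrict_af_def args_def by simp

lemma atts_restrict: "atts (restrict_af F B) = atts F \<inter> (B \<times> B)"
  unfolding restrict_af_def atts_def by simp

lemma scc_rec_cf:
  assumes "scc_rec base F S"
    and H1: "\<And>F S. base F S \<Longrightarrow> conflict_free F S"
  shows "conflict_free F S"
  using assms(1)
proof (induction rule: scc_rec.induct)
  case (single F S)
  then show ?case using H1 by blast
next
  case (multi F S)
  show ?case unfolding conflict_free_def
  proof (intro conjI ballI)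
    show "S \<subseteq> args F" by fact
    fix a b assume a: "a \<in> S" and b: "b \<in> S"
    show "(a, b) \<notin> atts F"
    proof
      assume ab: "(a, b) \<in> atts F"
      define X where "X = scc_of F b"
      have bA: "b \<in> args F" using b multi(2) by blast
      have bX: "b \<in> X" unfolding X_def by (rule scc_of_self[OF bA])
      have XS: "X \<in> SCCs F" unfolding X_def by (rule scc_of_in[OF bA])
      have cfX: "conflict_free (restrict_af F (X - D_set F S X)) (S \<inter> X)"
        using multi(3) XS by simp
      hence sub: "S \<inter> X \<subseteq> X - D_set F S X"
        unfolding conflict_free_def args_restrict by blast
      show False
      proof (cases "a \<in> X")
        case True
        then show ?thesis using cfX a b bX ab sub
          unfolding conflict_free_def atts_restrict by blast
      next
        case False
        then have "b \<in> D_set F S X" unfolding D_set_def using a bX ab by blast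
        then show ?thesis using sub b bX by blast
      qed
    qed
  qed
qed

lemma main:
  assumes "scc_rec base F S"
    and H1: "\<And>F S. base F S \<Longrightarrow> conflict_free F S"
    and H2: "\<And>F S x. base F S \<Longrightarrow> args F = {x} \<Longrightarrow> atts F = {} \<Longrightarrow> x \<in> S"
  shows "wf_af F \<Longrightarrow> grounded F \<subseteq> S"
  using assms(1)
proof (induction rule: scc_rec.induct)
  case (single F S)
  obtain X where X: "SCCs F = {X}" using single(1) by blast
  have same: "\<And>y z. y \<in> args F \<Longrightarrow> z \<in> args F \<Longrightarrow> z \<in> scc_of F y"
  proof -
    fix y z assume y: "y \<in> args F" and z: "z \<in> args F"
    have "scc_of F y = X" "scc_of F z = X" using scc_of_in[OF y] scc_of_in[OF z] X by auto
    then show "z \<in> scc_of F y" using scc_of_self[OF z] by simp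
  qed
  have wf: "atts F \<subseteq> args F \<times> args F" using single(3) unfolding wf_af_def .
  have "grounded F \<subseteq> {x. (\<forall>b. (b, x) \<notin> atts F) \<and> x \<in> S}"
  proof (rule grounded_induct)
    fix x T assume x: "x \<in> args F" and T: "T \<subseteq> grounded F"
      "T \<subseteq> {x. (\<forall>b. (b, x) \<notin> atts F) \<and> x \<in> S}" and d: "defends F T x"
    have un: "\<forall>b. (b, x) \<notin> atts F"
    proof (intro allI notI)
      fix b assume bx: "(b, x) \<in> atts F"
      then obtain c where c: "c \<in> T" "(c, b) \<in> atts F" using d unfolding defends_def by blast
      have cun: "\<forall>z. (z, c) \<notin> atts F" using c T by blast
      have "b \<in> args F" "c \<in> args F" using c(2) wf by auto
      hence "c \<in> scc_of F b" by (rule same)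
      hence "(b, c) \<in> (atts F)\<^sup>*" unfolding scc_of_def by simp
      then show False
      proof (cases rule: rtranclE)
        case base then show ?thesis using c cun by blast
      next
        case (step z) then show ?thesis using cun by blast
      qed
    qed
    have argsx: "args F = {x}"
    proof
      show "args F \<subseteq> {x}"
      proof
        fix y assume y: "y \<in> args F"
        have "y \<in> scc_of F x" by (rule same[OF x y])
        hence "(y, x) \<in> (atts F)\<^sup>*" unfolding scc_of_def by simp
        then show "y \<in> {x}"
          by (cases rule: rtranclE) (use un in auto)
      qed
    qed (use x in auto)
    have "atts F = {}"
    proof (rule ccontr)
      assume "atts F \<noteq> {}"
      then obtain p q where pq: "(p, q) \<in> atts F" by auto
      hence "q = x" using wf argsx by auto
      then show False using pq un by blast
    qed
    then show "x \<in> {x. (\<forall>b. (b, x) \<notin> atts F) \<and> x \<in> S}"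
      using H2[OF single(2) argsx] un by blast
  qed
  then show ?case by blast
next
  case (multi F S)
  let ?FX = "\<lambda>X. restrict_af F (X - D_set F S X)"
  have all: "\<forall>X\<in>SCCs F. scc_rec base (?FX X) (S \<inter> X)"
  proof
    fix X assume "X \<in> SCCs F"
    with multi(3) show "scc_rec base (?FX X) (S \<inter> X)" by simp
  qed
  have cfS: "conflict_free F S"
    by (rule scc_rec_cf[OF scc_rec.multi[OF multi(1) multi(2) all] H1])
  have IH: "grounded (?FX X) \<subseteq> S \<inter> X" if XS: "X \<in> SCCs F" for X
  proof -
    from multi(3) XS have "wf_af (?FX X) \<longrightarrow> grounded (?FX X) \<subseteq> S \<inter> X" by simp
    moreover have "wf_af (?FX X)" by (rule wf_restrict[OF multi(4)])
    ultimately show ?thesis by simp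
  qed
  have "grounded F \<subseteq> {x. x \<in> S \<and> x \<in> grounded (?FX (scc_of F x))}"
  proof (rule grounded_induct)
    fix x T assume x: "x \<in> args F" and T: "T \<subseteq> grounded F"
      "T \<subseteq> {x. x \<in> S \<and> x \<in> grounded (?FX (scc_of F x))}" and d: "defends F T x"
    define X where "X = scc_of F x"
    have XS: "X \<in> SCCs F" using scc_of_in[OF x] X_def by simp
    have xX: "x \<in> X" using scc_of_self[OF x] X_def by simp
    have xD: "x \<notin> D_set F S X"
    proof
      assume "x \<in> D_set F S X"
      then obtain a where a: "a \<in> S" "(a, x) \<in> atts F" unfolding D_set_def by blast
      then obtain c where c: "c \<in> T" "(c, a) \<in> atts F" using d unfolding defends_def by blast
      have "c \<in> S" using c T by blast
      then show False using cfS a c unfolding conflict_free_def by blast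
    qed
    have gX: "grounded (?FX X) \<subseteq> X - D_set F S X"
      using grounded_args[of "?FX X"] unfolding args_restrict by blast
    have "x \<in> char_fun (?FX X) (grounded (?FX X))"
      unfolding char_fun_def mem_Collect_eq
    proof (intro conjI)
      show "x \<in> args (?FX X)" using x xX xD unfolding args_restrict by blast
      show "defends (?FX X) (grounded (?FX X)) x"
        unfolding defends_def
      proof (intro allI impI)
        fix b assume bx: "(b, x) \<in> atts (?FX X)"
        hence bx': "(b, x) \<in> atts F" and bX: "b \<in> X - D_set F S X"
          unfolding atts_restrict by auto
        obtain c where c: "c \<in> T" "(c, b) \<in> atts F" using d bx' unfolding defends_def by blast
        have cS: "c \<in> S" and cG: "c \<in> grounded (?FX (scc_of F c))" using c T by blast+
        have cX: "c \<in> X"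
        proof (rule ccontr)
          assume "c \<notin> X"
          hence "b \<in> D_set F S X" using bX cS c unfolding D_set_def by blast
          then show False using bX by blast
        qed
        have "scc_of F c = X" using scc_of_eq cX X_def by metis
        hence cG': "c \<in> grounded (?FX X)" using cG by simp
        then show "\<exists>c\<in>grounded (?FX X). (c, b) \<in> atts (?FX X)"
          using gX c bX unfolding atts_restrict by blast
      qed
    qed
    moreover have eq: "char_fun (?FX X) (grounded (?FX X)) = grounded (?FX X)"
      by (rule grounded_fix[symmetric])
    ultimately have xG: "x \<in> grounded (?FX X)" by (simp only:)
    then have "x \<in> S" using IH[OF XS] by blast
    then show "x \<in> {x. x \<in> S \<and> x \<in> grounded (?FX (scc_of F x))}"
      using xG by (simp add: X_def)
  qed
  then show ?case by blast
qed

lemma naive_H2: "naive F S \<Longrightarrow> args F = {x} \<Longrightarrow> atts F = {} \<Longrightarrow> x \<in> S"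
proof -
  assume s: "naive F S" and a: "args F = {x}" and e: "atts F = {}"
  have "conflict_free F {x}" using a e unfolding conflict_free_def by auto
  moreover have "S \<subseteq> {x}" using s a unfolding naive_def conflict_free_def by blast
  ultimately have "{x} = S" using s unfolding naive_def by blast
  then show "x \<in> S" by blast
qed

lemma stage_H2: "stage F S \<Longrightarrow> args F = {x} \<Longrightarrow> atts F = {} \<Longrightarrow> x \<in> S"
proof -
  assume s: "stage F S" and a: "args F = {x}" and e: "atts F = {}"
  show "x \<in> S"
  proof (rule ccontr)
    assume "x \<notin> S"
    moreover have "S \<subseteq> args F" using s unfolding stage_def conflict_free_def by simp
    ultimately have "S = {}" using a by auto
    moreover have "conflict_free F {x}" using a e unfolding conflict_free_def by auto
    moreover have "range_plus F {} \<subset> range_plus F {x}" unfolding range_plus_def by auto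
    moreover have "\<not> (\<exists>T. conflict_free F T \<and> range_plus F S \<subset> range_plus F T)"
      using s unfolding stage_def by (rule conjunct2)
    ultimately show False by blast
  qed
qed

lemma naive_H1: "naive F S \<Longrightarrow> conflict_free F S" unfolding naive_def by blast
lemma stage_H1: "stage F S \<Longrightarrow> conflict_free F S" unfolding stage_def by blast

theorem corollary1:
  fixes F :: "'a af" and S :: "'a set"
  assumes "wf_af F"
    and "cf2 F S \<or> stg2 F S"
  shows "grounded F \<subseteq> S"
  using assms(2)
proof
  assume "cf2 F S"
  then have "scc_rec naive F S" unfolding cf2_def .
  from main[OF this naive_H1 naive_H2 assms(1)] show ?thesis .
next
  assume "stg2 F S"
  then have "scc_rec stage F S" unfolding stg2_def .
  from main[OF this stage_H1 stage_H2 assms(1)] show ?thesis .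
qed

end
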